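(* Let $F$ be a distribution function on $\mathbb{R}$ with tail $\overline{F}=1-F$ and let $h(\cdot)$ be a positive function. Then: $F\in \mathrm{GMDA}(h)$ and $h(x)\to\infty$ as $x\to\infty$ if and only if $F\in \mathrm{GMDA}(h)\cap\mathcal{L}$. Moreover, either of these equivalent conditions implies that $h^{p}(\cdot)\in\mathcal{H}^{\ast}_F$ for every $p\in(0,1)$.
   Context: A distribution function $F$ with upper endpoint $x_F=\sup\{x:F(x)<1\}$ belongs to the Gumbel max-domain of attraction with scaling function $h>0$, written $F\in\mathrm{GMDA}(h)$, if $\lim_{x\to x_F}\overline{F}(x+yh(x))/\overline{F}(x)=e^{-y}$ for all $y\in\mathbb{R}$. $F$ is long-tailed, $F\in\mathcal{L}$, if $\overline{F}(x)>0$ for all $x\ge 0$ and $\overline{F}(x+y)/\overline{F}(x)\to1$ as $x\to\infty$ for every $y\in\mathbb{R}$. For $F\in\mathcal{L}$, $\mathcal{H}_F$ is the set of eventually positive functions $h$ such that (i) $h(x)/x\to0$; (ii) $\overline{F}(x+yh(x))/\overline{F}(x)\to1$ as $x\to\infty$ for every $y\in\mathbb{R}$; (iii) $h$ is weakly self-neglecting, i.e. $\limsup_{x\to\infty}h(x+yh(x))/h(x)<\infty$ for every $y\in\mathbb{R}$. $\mathcal{H}^\ast_F=\{h\in\mathcal{H}_F: h(x)\to\infty\}$. *)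

theory Defs
  imports "HOL-Analysis.Analysis" "HOL-Library.Liminf_Limsup"
begin

definition distr_fun :: "(real \<Rightarrow> real) \<Rightarrow> bool" where
  "distr_fun F \<longleftrightarrow> mono F \<and> (\<forall>x. continuous (at_right x) F)
     \<and> (F \<longlongrightarrow> 0) at_bot \<and> (F \<longlongrightarrow> 1) at_top"

definition tail :: "(real \<Rightarrow> real) \<Rightarrow> real \<Rightarrow> real" where
  "tail F x = 1 - F x"

definition upper_endpoint :: "(real \<Rightarrow> real) \<Rightarrow> ereal" where
  "upper_endpoint F = Sup (ereal ` {x. F x < 1})"

definition endpoint_filter :: "(real \<Rightarrow> real) \<Rightarrow> real filter" where
  "endpoint_filter F =
     (if upper_endpoint F = \<infinity> then at_top else at_left (real_of_ereal (upper_endpoint F)))"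

definition GMDA :: "(real \<Rightarrow> real) \<Rightarrow> (real \<Rightarrow> real) \<Rightarrow> bool" where
  "GMDA F h \<longleftrightarrow> (\<forall>y::real.
     ((\<lambda>x. tail F (x + y * h x) / tail F x) \<longlongrightarrow> exp (- y)) (endpoint_filter F))"

definition long_tailed :: "(real \<Rightarrow> real) \<Rightarrow> bool" where
  "long_tailed F \<longleftrightarrow> (\<forall>x\<ge>0. tail F x > 0) \<and>
     (\<forall>y::real. ((\<lambda>x. tail F (x + y) / tail F x) \<longlongrightarrow> 1) at_top)"

definition H_class :: "(real \<Rightarrow> real) \<Rightarrow> (real \<Rightarrow> real) set" where
  "H_class F = {h. eventually (\<lambda>x. h x > 0) at_top
     \<and> ((\<lambda>x. h x / x) \<longlongrightarrow> 0) at_top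
     \<and> (\<forall>y::real. ((\<lambda>x. tail F (x + y * h x) / tail F x) \<longlongrightarrow> 1) at_top)
     \<and> (\<forall>y::real. Limsup at_top (\<lambda>x. ereal (h (x + y * h x) / h x)) < \<infinity>)}"

definition H_star_class :: "(real \<Rightarrow> real) \<Rightarrow> (real \<Rightarrow> real) set" where
  "H_star_class F = {h \<in> H_class F. filterlim h at_top at_top}"

end

theory Submission
  imports Defs
begin

lemma df_le1:
  assumes "distr_fun F" shows "F x \<le> 1"
proof -
  have m: "mono F" and l: "(F \<longlongrightarrow> 1) at_top" using assms by (auto simp: distr_fun_def)
  have "eventually (\<lambda>t. F x \<le> F t) at_top"
    using eventually_ge_at_top[of x] by eventually_elim (use m in \<open>auto simp: mono_def\<close>)
  from tendsto_lowerbound[OF l this] show ?thesis by simp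
qed

lemma tail_anti: "distr_fun F \<Longrightarrow> a \<le> b \<Longrightarrow> tail F b \<le> tail F a"
  by (auto simp: tail_def distr_fun_def mono_def)

lemma tail_pos: "F x < 1 \<Longrightarrow> tail F x > 0" by (simp add: tail_def)

lemma allF_endpoint:
  assumes "\<forall>x. F x < 1" shows "endpoint_filter F = at_top"
proof -
  have "{x. F x < 1} = UNIV" using assms by auto
  hence "upper_endpoint F = Sup (range ereal)" by (simp add: upper_endpoint_def)
  also have "\<dots> = \<infinity>"
    by (meson Sup_le_iff ereal_top iso_tuple_UNIV_I order_refl rev_image_eqI)
  finally show ?thesis by (simp add: endpoint_filter_def)
qed

lemma endpoint_allF:
  assumes "distr_fun F" "upper_endpoint F = \<infinity>" shows "F x < 1"
proof -
  have "ereal x < Sup (ereal ` {x. F x < 1})" using assms by (simp add: upper_endpoint_def)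
  then obtain z where "F z < 1" "x < z" by (auto simp: less_Sup_iff)
  then show ?thesis using assms(1) unfolding distr_fun_def mono_def
    by (meson le_less_trans less_imp_le)
qed

lemma gmda_inf_allF:
  assumes dF: "distr_fun F" and G: "GMDA F h"
    and hl: "filterlim h at_top (endpoint_filter F)"
  shows "\<forall>x. F x < 1"
proof (rule ccontr)
  assume nall: "\<not> (\<forall>x. F x < 1)"
  then obtain x1 where x1: "\<not> F x1 < 1" by auto
  have m: "mono F" and lb: "(F \<longlongrightarrow> 0) at_bot" using dF by (auto simp: distr_fun_def)
  have "eventually (\<lambda>x. F x < 1) at_bot" using order_tendstoD(2)[OF lb, of 1] by simp
  then obtain x0 where x0: "F x0 < 1" by (meson eventually_happens' trivial_limit_at_bot_linorder)
  have ne: "upper_endpoint F \<noteq> \<infinity>" using endpoint_allF[OF dF] x1 by blast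
  have lo: "ereal x0 \<le> upper_endpoint F" unfolding upper_endpoint_def
    using x0 by (auto intro: Sup_upper)
  have up: "upper_endpoint F \<le> ereal x1" unfolding upper_endpoint_def
  proof (rule Sup_least)
    fix e assume "e \<in> ereal ` {x. F x < 1}"
    then obtain z where z: "e = ereal z" "F z < 1" by auto
    have "z \<le> x1"
    proof (rule ccontr)
      assume "\<not> z \<le> x1" hence "F x1 \<le> F z" using m by (auto simp: mono_def)
      thus False using z x1 by auto
    qed
    thus "e \<le> ereal x1" using z by simp
  qed
  define c where "c = real_of_ereal (upper_endpoint F)"
  have ce: "upper_endpoint F = ereal c" unfolding c_def using lo up
    by (cases "upper_endpoint F") auto
  have ef: "endpoint_filter F = at_left c" using ce by (simp add: endpoint_filter_def)
  have t0: "tail F t = 0" if "t > c" for t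
  proof -
    have "\<not> F t < 1"
    proof
      assume "F t < 1"
      hence "ereal t \<le> upper_endpoint F" unfolding upper_endpoint_def by (auto intro: Sup_upper)
      thus False using that ce by simp
    qed
    thus ?thesis using df_le1[OF dF, of t] by (simp add: tail_def)
  qed
  have e1: "eventually (\<lambda>x. 2 \<le> h x) (at_left c)" using hl ef by (simp add: filterlim_at_top)
  have e2: "eventually (\<lambda>x. x \<in> {c - 1<..<c}) (at_left c)" by (rule eventually_at_left_real) simp
  have lim: "((\<lambda>x. tail F (x + 1 * h x) / tail F x) \<longlongrightarrow> exp (-1)) (at_left c)"
    using spec[OF G[unfolded GMDA_def ef], of 1] .
  have e3: "eventually (\<lambda>x. 0 < tail F (x + 1 * h x) / tail F x) (at_left c)"
    by (rule order_tendstoD(1)[OF lim]) simp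
  have "eventually (\<lambda>x. False) (at_left c)"
    using e1 e2 e3
  proof eventually_elim
    case (elim x)
    hence "x + 1 * h x > c" by auto
    hence "tail F (x + 1 * h x) = 0" by (rule t0)
    thus False using elim by simp
  qed
  thus False by simp
qed

lemma sandwich:
  assumes dF: "distr_fun F" and pos: "\<forall>x. F x < 1"
    and G: "\<forall>y. ((\<lambda>x. tail F (x + y * h x) / tail F x) \<longlongrightarrow> exp (- y)) at_top"
    and small: "\<forall>\<epsilon>>0. eventually (\<lambda>x. \<bar>g x\<bar> \<le> \<epsilon> * h x) at_top"
  shows "((\<lambda>x. tail F (x + g x) / tail F x) \<longlongrightarrow> 1) at_top"
proof (rule order_tendstoI)
  fix a :: real assume a: "a < 1"
  define \<epsilon> where "\<epsilon> = (1 - a) / 2"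
  have ep: "\<epsilon> > 0" using a by (simp add: \<epsilon>_def)
  have "1 + (- \<epsilon>) \<le> exp (- \<epsilon>)" by (rule exp_ge_add_one_self)
  moreover have "a < 1 + (- \<epsilon>)" using a by (simp add: \<epsilon>_def field_simps)
  ultimately have ea: "a < exp (- \<epsilon>)" by linarith
  have e1: "eventually (\<lambda>x. a < tail F (x + \<epsilon> * h x) / tail F x) at_top"
    using order_tendstoD(1)[OF G[rule_format, of \<epsilon>] ea] .
  show "eventually (\<lambda>x. a < tail F (x + g x) / tail F x) at_top"
    using e1 small[rule_format, OF ep]
  proof eventually_elim
    case (elim x)
    have "x + g x \<le> x + \<epsilon> * h x" using elim(2) by linarith
    hence "tail F (x + \<epsilon> * h x) \<le> tail F (x + g x)" by (rule tail_anti[OF dF])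
    hence "tail F (x + \<epsilon> * h x) / tail F x \<le> tail F (x + g x) / tail F x"
      using tail_pos[of F x] pos by (simp add: divide_right_mono)
    thus ?case using elim(1) by linarith
  qed
next
  fix a :: real assume a: "a > 1"
  define \<epsilon> where "\<epsilon> = ln a / 2"
  have ep: "\<epsilon> > 0" using a by (simp add: \<epsilon>_def)
  have "exp \<epsilon> < exp (ln a)" using ep by (simp add: \<epsilon>_def)
  hence ea: "exp (- (- \<epsilon>)) < a" using a by simp
  have e1: "eventually (\<lambda>x. tail F (x + (- \<epsilon>) * h x) / tail F x < a) at_top"
    using order_tendstoD(2)[OF G[rule_format, of "- \<epsilon>"] ea] .
  show "eventually (\<lambda>x. tail F (x + g x) / tail F x < a) at_top"
    using e1 small[rule_format, OF ep]
  proof eventually_elim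
    case (elim x)
    have "x + (- \<epsilon>) * h x \<le> x + g x" using elim(2) by linarith
    hence "tail F (x + g x) \<le> tail F (x + (- \<epsilon>) * h x)" by (rule tail_anti[OF dF])
    hence "tail F (x + g x) / tail F x \<le> tail F (x + (- \<epsilon>) * h x) / tail F x"
      using tail_pos[of F x] pos by (simp add: divide_right_mono)
    thus ?case using elim(1) by linarith
  qed
qed

lemma h_top:
  assumes dF: "distr_fun F" and pos: "\<forall>x. F x < 1"
    and G: "\<forall>y. ((\<lambda>x. tail F (x + y * h x) / tail F x) \<longlongrightarrow> exp (- y)) at_top"
    and LT: "\<forall>y::real. ((\<lambda>x. tail F (x + y) / tail F x) \<longlongrightarrow> 1) at_top"
  shows "filterlim h at_top at_top"
  unfolding filterlim_at_top
proof
  fix M :: real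
  have "(2::real) \<le> exp 1" using exp_ge_add_one_self[of "1::real"] by simp
  hence "exp (- 1) * 2 \<le> exp (- 1) * (exp 1::real)" by (intro mult_left_mono) auto
  also have "\<dots> = 1" by (simp add: exp_minus_inverse mult.commute)
  finally have "exp (- 1::real) < 2/3" by linarith
  hence e1: "eventually (\<lambda>x. tail F (x + 1 * h x) / tail F x < 2/3) at_top"
    by (rule order_tendstoD(2)[OF G[rule_format, of 1]])
  have e2: "eventually (\<lambda>x. 2/3 < tail F (x + M) / tail F x) at_top"
    by (rule order_tendstoD(1)[OF LT[rule_format, of M]]) simp
  show "eventually (\<lambda>x. M \<le> h x) at_top"
    using e1 e2
  proof eventually_elim
    case (elim x)
    show ?case
    proof (rule ccontr)
      assume "\<not> M \<le> h x"
      hence "x + 1 * h x \<le> x + M" by simp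
      hence "tail F (x + M) \<le> tail F (x + 1 * h x)" by (rule tail_anti[OF dF])
      hence "tail F (x + M) / tail F x \<le> tail F (x + 1 * h x) / tail F x"
        using tail_pos[of F x] pos by (simp add: divide_right_mono)
      thus False using elim by linarith
    qed
  qed
qed

lemma small_powr:
  fixes h :: "real \<Rightarrow> real"
  assumes hl: "filterlim h at_top at_top" and p: "p < 1" and hp: "\<And>x. h x > 0"
  shows "\<forall>\<epsilon>>0. eventually (\<lambda>x. \<bar>y * h x powr p\<bar> \<le> \<epsilon> * h x) at_top"
proof (intro allI impI)
  fix \<epsilon> :: real assume ep: "\<epsilon> > 0"
  have "((\<lambda>x. h x powr (p - 1)) \<longlongrightarrow> 0) at_top"
    using tendsto_neg_powr[of "p - 1" h at_top] p hl by simp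
  moreover have "0 < \<epsilon> / (\<bar>y\<bar> + 1)" using ep by simp
  ultimately have "eventually (\<lambda>x. h x powr (p - 1) < \<epsilon> / (\<bar>y\<bar> + 1)) at_top"
    by (rule order_tendstoD(2))
  thus "eventually (\<lambda>x. \<bar>y * h x powr p\<bar> \<le> \<epsilon> * h x) at_top"
  proof eventually_elim
    case (elim x)
    have hx: "h x > 0" by (rule hp)
    have eq: "h x powr p = h x powr (p - 1) * h x"
      using powr_add[of "h x" "p - 1" 1] hx by simp
    have "\<bar>y * h x powr p\<bar> = \<bar>y\<bar> * h x powr (p - 1) * h x" using eq hx
      by (simp add: abs_mult)
    also have "\<dots> \<le> (\<bar>y\<bar> + 1) * h x powr (p - 1) * h x"
      using hx by (intro mult_right_mono) auto
    also have "\<dots> \<le> (\<bar>y\<bar> + 1) * (\<epsilon> / (\<bar>y\<bar> + 1)) * h x"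
      using elim hx by (intro mult_right_mono mult_left_mono) auto
    also have "\<dots> = \<epsilon> * h x" by simp
    finally show ?case .
  qed
qed

lemma part2:
  fixes h :: "real \<Rightarrow> real"
  assumes dF: "distr_fun F" and pos: "\<forall>x. F x < 1"
    and G: "\<forall>y. ((\<lambda>x. tail F (x + y * h x) / tail F x) \<longlongrightarrow> exp (- y)) at_top"
    and hl: "filterlim h at_top at_top" and hp: "\<And>x. h x > 0"
    and p: "0 < p" "p < 1"
  shows "(\<lambda>x. h x powr p) \<in> H_star_class F"
proof -
  have tp: "\<And>x. tail F x > 0" using pos tail_pos by blast
  have Ft: "(F \<longlongrightarrow> 1) at_top" using dF by (simp add: distr_fun_def)
  have t0: "((\<lambda>x. tail F x) \<longlongrightarrow> 0) at_top"
    unfolding tail_def using tendsto_diff[OF tendsto_const[of 1] Ft] by simp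
  have r1: "((\<lambda>x. tail F (x + (-1) * h x) / tail F x) \<longlongrightarrow> exp (- (-1))) at_top"
    using G by blast
  have "((\<lambda>x. tail F (x + (-1) * h x) / tail F x * tail F x) \<longlongrightarrow> exp (- (-1)) * 0) at_top"
    by (rule tendsto_mult[OF r1 t0])
  moreover have "(\<lambda>x. tail F (x + (-1) * h x) / tail F x * tail F x) = (\<lambda>x. tail F (x - h x))"
    using tp by (intro ext) (simp add: less_imp_neq[symmetric])
  ultimately have t1: "((\<lambda>x. tail F (x - h x)) \<longlongrightarrow> 0) at_top" by simp
  have S1: "filterlim (\<lambda>x. x - h x) at_top at_top"
    unfolding filterlim_at_top
  proof
    fix M :: real
    have "eventually (\<lambda>x. tail F (x - h x) < tail F M) at_top"
      by (rule order_tendstoD(2)[OF t1 tp])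
    thus "eventually (\<lambda>x. M \<le> x - h x) at_top"
    proof eventually_elim
      case (elim x)
      show ?case
      proof (rule ccontr)
        assume "\<not> M \<le> x - h x"
        hence "tail F M \<le> tail F (x - h x)" by (intro tail_anti[OF dF]) simp
        thus False using elim by simp
      qed
    qed
  qed
  have ev_lt: "eventually (\<lambda>x. h x < x \<and> 1 < x) at_top"
  proof -
    have "eventually (\<lambda>x. 0 < x - h x) at_top" using S1 unfolding filterlim_at_top_dense by blast
    thus ?thesis using eventually_gt_at_top[of 1] by eventually_elim auto
  qed
  have c2: "((\<lambda>x. h x powr p / x) \<longlongrightarrow> 0) at_top"
  proof (rule tendsto_sandwich[of "\<lambda>_. 0" _ _ "\<lambda>x. x powr (p - 1)"])
    show "eventually (\<lambda>x. 0 \<le> h x powr p / x) at_top"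
      using ev_lt by eventually_elim simp
    show "eventually (\<lambda>x. h x powr p / x \<le> x powr (p - 1)) at_top"
      using ev_lt
    proof eventually_elim
      case (elim x)
      have "h x powr p \<le> x powr p" using elim hp[of x] p by (intro powr_mono2) auto
      hence "h x powr p / x \<le> x powr p / x" using elim by (simp add: divide_right_mono)
      also have "\<dots> = x powr (p - 1)" using elim by (simp add: powr_diff)
      finally show ?case .
    qed
    show "((\<lambda>x. 0) \<longlongrightarrow> (0::real)) at_top" by simp
    show "((\<lambda>x. x powr (p - 1)) \<longlongrightarrow> 0) at_top"
      using tendsto_neg_powr[of "p - 1" "\<lambda>x. x" at_top, OF _ filterlim_ident] p by simp
  qed
  have c3: "((\<lambda>x. tail F (x + y * h x powr p) / tail F x) \<longlongrightarrow> 1) at_top" for y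
    by (rule sandwich[OF dF pos G small_powr[OF hl p(2) hp]])
  have c4: "Limsup at_top (\<lambda>x. ereal (h (x + y * h x powr p) powr p / h x powr p)) < \<infinity>" for y
  proof -
    define u where "u x = x + y * h x powr p" for x
    have E1: "eventually (\<lambda>x. \<bar>y * h x powr p\<bar> \<le> 1 * h x) at_top"
      using spec[OF small_powr[OF hl p(2) hp, of y], of 1] by simp
    have ul: "filterlim u at_top at_top"
      by (rule filterlim_at_top_mono[OF S1]) (use E1 in \<open>eventually_elim, auto simp: u_def\<close>)
    have "exp (- (-1)) < (3::real)" using e_less_272 by simp
    hence "eventually (\<lambda>t. tail F (t + (-1) * h t) / tail F t < 3) at_top"
      by (rule order_tendstoD(2)[OF G[rule_format, of "-1"]])
    hence E2: "eventually (\<lambda>x. tail F (u x + (-1) * h (u x)) / tail F (u x) < 3) at_top"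
      using ul unfolding filterlim_iff by blast
    have E3: "eventually (\<lambda>x. tail F (u x) / tail F x < 2) at_top"
      unfolding u_def by (rule order_tendstoD(2)[OF c3]) simp
    have "(2::real) \<le> exp 1" using exp_ge_add_one_self[of "1::real"] by simp
    hence "(2::real) ^ 3 \<le> exp 1 ^ 3" by (intro power_mono) auto
    also have "exp (1::real) ^ 3 = exp (- (-3))" by (simp add: exp_of_nat_mult[symmetric])
    finally have "6 < exp (- (-3::real))" by simp
    hence E4: "eventually (\<lambda>x. 6 < tail F (x + (-3) * h x) / tail F x) at_top"
      by (rule order_tendstoD(1)[OF G[rule_format, of "-3"]])
    have E5: "eventually (\<lambda>x. h (u x) \<le> 4 * h x) at_top"
      using E1 E2 E3 E4
    proof eventually_elim
      case (elim x)
      show ?case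
      proof (rule ccontr)
        assume "\<not> h (u x) \<le> 4 * h x"
        hence "u x + (-1) * h (u x) \<le> x + (-3) * h x" using elim(1) by (simp add: u_def)
        hence a: "tail F (x + (-3) * h x) \<le> tail F (u x + (-1) * h (u x))" by (rule tail_anti[OF dF])
        have b: "6 * tail F x < tail F (x + (-3) * h x)" using elim(4) tp[of x]
          by (simp add: pos_less_divide_eq)
        have c: "tail F (u x + (-1) * h (u x)) < 3 * tail F (u x)" using elim(2) tp[of "u x"]
          by (simp add: pos_divide_less_eq)
        have d: "tail F (u x) < 2 * tail F x" using elim(3) tp[of x]
          by (simp add: pos_divide_less_eq)
        show False using a b c d by linarith
      qed
    qed
    have "eventually (\<lambda>x. ereal (h (x + y * h x powr p) powr p / h x powr p) \<le> ereal (4 powr p)) at_top"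
      using E5
    proof eventually_elim
      case (elim x)
      have hx: "h x > 0" by (rule hp)
      have "h (u x) powr p \<le> (4 * h x) powr p" using elim hp[of "u x"] p by (intro powr_mono2) auto
      also have "\<dots> = 4 powr p * h x powr p" using hx by (simp add: powr_mult)
      finally have "h (u x) powr p / h x powr p \<le> 4 powr p" using hx by (simp add: divide_le_eq)
      thus ?case by (simp add: u_def)
    qed
    hence "Limsup at_top (\<lambda>x. ereal (h (x + y * h x powr p) powr p / h x powr p)) \<le> ereal (4 powr p)"
      by (rule Limsup_bounded)
    moreover have "ereal (4 powr p) < \<infinity>" by simp
    ultimately show ?thesis by (rule order_le_less_trans)
  qed
  have hpl: "filterlim (\<lambda>x. h x powr p) at_top at_top"
    unfolding filterlim_at_top
  proof
    fix Z :: real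
    have "eventually (\<lambda>x. \<bar>Z\<bar> powr (1/p) \<le> h x) at_top" using hl by (simp add: filterlim_at_top)
    thus "eventually (\<lambda>x. Z \<le> h x powr p) at_top"
    proof eventually_elim
      case (elim x)
      have "(\<bar>Z\<bar> powr (1/p)) powr p \<le> h x powr p" using elim p by (intro powr_mono2) auto
      moreover have "(\<bar>Z\<bar> powr (1/p)) powr p = \<bar>Z\<bar>" using p by (simp add: powr_powr)
      ultimately show ?case by linarith
    qed
  qed
  have hne: "eventually (\<lambda>x. h x \<noteq> 0) at_top"
    by (intro always_eventually allI) (metis hp less_irrefl)
  show ?thesis
    unfolding H_star_class_def H_class_def
    using c2 c3 c4 hpl hp hne by (auto intro: always_eventually)
qed

theorem lemma2p1:
  fixes F h :: "real \<Rightarrow> real"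
  assumes "distr_fun F"
    and "\<And>x. h x > 0"
  shows "((GMDA F h \<and> filterlim h at_top (endpoint_filter F)) \<longleftrightarrow> (GMDA F h \<and> long_tailed F))
         \<and> (GMDA F h \<and> long_tailed F \<longrightarrow>
              (\<forall>p::real. 0 < p \<and> p < 1 \<longrightarrow> (\<lambda>x. h x powr p) \<in> H_star_class F))"
proof -
  note dF = assms(1) and hp = assms(2)
  have LT_allF: "\<forall>x. F x < 1" if "long_tailed F"
  proof
    fix x
    have "tail F (max x 0) > 0" using that by (simp add: long_tailed_def)
    hence "F (max x 0) < 1" by (simp add: tail_def)
    moreover have "F x \<le> F (max x 0)" using dF by (simp add: distr_fun_def mono_def)
    ultimately show "F x < 1" by linarith
  qed
  have Gtop: "\<forall>y. ((\<lambda>x. tail F (x + y * h x) / tail F x) \<longlongrightarrow> exp (- y)) at_top"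
    if "GMDA F h" "\<forall>x. F x < 1"
    using that allF_endpoint[OF that(2)] by (simp add: GMDA_def)
  have A: "long_tailed F" if G: "GMDA F h" and hl: "filterlim h at_top (endpoint_filter F)"
  proof -
    have pos: "\<forall>x. F x < 1" by (rule gmda_inf_allF[OF dF G hl])
    have hl': "filterlim h at_top at_top" using hl allF_endpoint[OF pos] by simp
    have "((\<lambda>x. tail F (x + y) / tail F x) \<longlongrightarrow> 1) at_top" for y
    proof (rule sandwich[OF dF pos Gtop[OF G pos]], intro allI impI)
      fix \<epsilon> :: real assume ep: "\<epsilon> > 0"
      have "eventually (\<lambda>x. \<bar>y\<bar> / \<epsilon> \<le> h x) at_top" using hl' by (simp add: filterlim_at_top)
      thus "eventually (\<lambda>x. \<bar>y\<bar> \<le> \<epsilon> * h x) at_top"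
        by eventually_elim (use ep in \<open>simp add: field_simps\<close>)
    qed
    thus ?thesis using pos tail_pos by (auto simp: long_tailed_def)
  qed
  have B: "filterlim h at_top (endpoint_filter F)" if G: "GMDA F h" and L: "long_tailed F"
  proof -
    have pos: "\<forall>x. F x < 1" by (rule LT_allF[OF L])
    have "filterlim h at_top at_top"
      using h_top[OF dF pos Gtop[OF G pos]] L by (simp add: long_tailed_def)
    thus ?thesis using allF_endpoint[OF pos] by simp
  qed
  have C: "(\<lambda>x. h x powr p) \<in> H_star_class F"
    if G: "GMDA F h" and L: "long_tailed F" and p: "0 < p" "p < 1" for p
  proof -
    have pos: "\<forall>x. F x < 1" by (rule LT_allF[OF L])
    have "filterlim h at_top at_top" using B[OF G L] allF_endpoint[OF pos] by simp
    thus ?thesis by (rule part2[OF dF pos Gtop[OF G pos] _ hp p])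
  qed
  show ?thesis using A B C by blast
qed

end
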